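(* For any connected graph $G_n$ on $n$ nodes, the stopping time of the broadcast protocol $\mathcal{B_{RR}}$ with the round-robin communication model is $O(n)$ rounds. In the asynchronous time model this holds with probability at least $1-n(2/e)^{3n}$, and in the synchronous time model with probability $1$.
   Context: Broadcast ($1$-dissemination): a single message initially located at one node must reach all nodes; a node holding the message transmits it to its communication partner when it acts (\texttt{PUSH}, or \texttt{EXCHANGE}). Round-robin gossip: each node chooses its communication partner according to a fixed cyclic list of its neighbors, contacting them in this order in its successive actions. Asynchronous time model: each timeslot one node chosen independently and uniformly at random acts; $n$ timeslots form a round. Synchronous time model: in each round every node acts; information received in a round can be sent only from the next round. The stopping time is the number of rounds until all nodes hold the message. *)

theory Defs
  imports "HOL-Probability.Probability"
begin

text \<open>Round-robin: each node v has a fixed cyclic list nbrs v of its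
  neighbours (distinct, listing exactly its neighbours); in its k-th action (k = 0,1,...)
  it contacts nbrs v ! (k mod length (nbrs v)).\<close>

definition simple_graph :: "nat set \<Rightarrow> (nat \<times> nat) set \<Rightarrow> bool" where
  "simple_graph V E \<longleftrightarrow> finite V \<and> E \<subseteq> V \<times> V \<and> sym E \<and> irrefl E"

definition connected_graph :: "nat set \<Rightarrow> (nat \<times> nat) set \<Rightarrow> bool" where
  "connected_graph V E \<longleftrightarrow> V \<noteq> {} \<and> (\<forall>u\<in>V. \<forall>v\<in>V. (u, v) \<in> E\<^sup>*)"

definition rr_lists :: "(nat \<times> nat) set \<Rightarrow> (nat \<Rightarrow> nat list) \<Rightarrow> bool" where
  "rr_lists E nbrs \<longleftrightarrow> (\<forall>v. distinct (nbrs v) \<and> set (nbrs v) = {u. (v, u) \<in> E})"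

definition rr_partner :: "(nat \<Rightarrow> nat list) \<Rightarrow> nat \<Rightarrow> nat \<Rightarrow> nat" where
  "rr_partner nbrs v k = nbrs v ! (k mod length (nbrs v))"

text \<open>Synchronous model: informed set after t rounds (round t is every node's t-th action;
  only nodes informed before the round may send in it). If exch, the protocol uses
  EXCHANGE (an acting node also receives the message from its partner), otherwise PUSH.\<close>

fun sync_informed :: "bool \<Rightarrow> (nat \<Rightarrow> nat list) \<Rightarrow> nat \<Rightarrow> nat \<Rightarrow> nat set" where
  "sync_informed exch nbrs s 0 = {s}"
| "sync_informed exch nbrs s (Suc t) =
     (let I = sync_informed exch nbrs s t in
      I \<union> {rr_partner nbrs v t | v. v \<in> I \<and> nbrs v \<noteq> []}
        \<union> {v. exch \<and> nbrs v \<noteq> [] \<and> rr_partner nbrs v t \<in> I})"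

text \<open>Asynchronous model: \<omega> j is the node acting in timeslot j; its action is its
  (number of earlier actions)-th action. Informed set after j timeslots.\<close>

fun async_informed :: "bool \<Rightarrow> (nat \<Rightarrow> nat list) \<Rightarrow> nat \<Rightarrow> (nat \<Rightarrow> nat) \<Rightarrow> nat \<Rightarrow> nat set" where
  "async_informed exch nbrs s \<omega> 0 = {s}"
| "async_informed exch nbrs s \<omega> (Suc j) =
     (let I = async_informed exch nbrs s \<omega> j; u = \<omega> j in
      if nbrs u = [] then I
      else (let p = rr_partner nbrs u (card {i. i < j \<and> \<omega> i = u}) in
            if u \<in> I then insert p I
            else if exch \<and> p \<in> I then insert u I
            else I))"

definition async_schedule :: "nat set \<Rightarrow> nat \<Rightarrow> (nat \<Rightarrow> nat) pmf" where
  "async_schedule V N = Pi_pmf {..<N} 0 (\<lambda>_. pmf_of_set V)"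

end

theory Submission
  imports Defs
begin


definition cnt :: "((nat \<Rightarrow> nat) \<Rightarrow> nat \<Rightarrow> nat) \<Rightarrow> (nat \<Rightarrow> nat) \<Rightarrow> nat \<Rightarrow> nat" where
  "cnt sel \<omega> N = card {j. j < N \<and> \<omega> j = sel \<omega> j}"

lemma cnt_upd:
  assumes na: "\<And>\<omega> \<omega>' j. (\<forall>i<j. \<omega> i = \<omega>' i) \<Longrightarrow> sel \<omega> j = sel \<omega>' j"
  shows "cnt sel (f(N:=y)) (Suc N) = cnt sel f N + (if y = sel f N then 1 else 0)"
proof -
  have e: "\<And>j. j \<le> N \<Longrightarrow> sel (f(N:=y)) j = sel f j" by (rule na) auto
  have "{j. j < Suc N \<and> (f(N:=y)) j = sel (f(N:=y)) j} =
        {j. j < N \<and> f j = sel f j} \<union> (if y = sel f N then {N} else {})"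
    using e by (auto simp: less_Suc_eq)
  then show ?thesis unfolding cnt_def by (auto simp: card_insert_if)
qed

lemma moment:
  fixes x :: real
  assumes V: "finite V" "V \<noteq> {}" and x: "0 \<le> x" "x \<le> 1"
    and na: "\<And>\<omega> \<omega>' j. (\<forall>i<j. \<omega> i = \<omega>' i) \<Longrightarrow> sel \<omega> j = sel \<omega>' j"
    and inV: "\<And>\<omega> j. sel \<omega> j \<in> V"
  shows "(\<integral>\<^sup>+\<omega>. ennreal (x ^ cnt sel \<omega> N) \<partial>measure_pmf (Pi_pmf {..<N} 0 (\<lambda>_. pmf_of_set V)))
         = ennreal ((1 - (1 - x) / card V) ^ N)"
proof (induction N)
  case 0
  then show ?case by (simp add: cnt_def)
next
  case (Suc N)
  let ?D = "pmf_of_set V"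
  let ?P = "Pi_pmf {..<N} 0 (\<lambda>_. ?D)"
  let ?q = "1 - (1 - x) / card V"
  have cV: "card V > 0" using V by (simp add: card_gt_0_iff)
  have inner: "(\<integral>\<^sup>+y. ennreal (x ^ (if y = v then 1 else 0)) \<partial>measure_pmf ?D) = ennreal ?q"
    if "v \<in> V" for v
  proof -
    have "(\<integral>\<^sup>+y. ennreal (x ^ (if y = v then 1 else 0)) \<partial>measure_pmf ?D)
        = (\<Sum>y\<in>V. ennreal (x ^ (if y = v then 1 else 0))) / card V"
      using V by (simp add: nn_integral_pmf_of_set)
    also have "(\<Sum>y\<in>V. ennreal (x ^ (if y = v then 1 else 0))) = ennreal (\<Sum>y\<in>V. x ^ (if y = v then 1 else 0))"
      using x by (subst sum_ennreal) auto
    also have "(\<Sum>y\<in>V. x ^ (if y = v then 1 else 0)) = x + real (card V - 1)"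
    proof -
      have "(\<Sum>y\<in>V. x ^ (if y = v then 1 else 0)) = (\<Sum>y\<in>insert v (V - {v}). x ^ (if y = v then 1 else 0))"
        using that by (simp add: insert_absorb)
      also have "\<dots> = x + (\<Sum>y\<in>V - {v}. 1)" using V by (subst sum.insert) auto
      finally show ?thesis using V that cV by simp
    qed
    also have "ennreal (x + real (card V - 1)) / of_nat (card V) = ennreal ?q"
    proof -
      have "ennreal (x + real (card V - 1)) / of_nat (card V) = ennreal ((x + real (card V - 1)) / real (card V))"
        using cV x by (subst divide_ennreal[symmetric]) (auto simp: ennreal_of_nat_eq_real_of_nat)
      also have "(x + real (card V - 1)) / real (card V) = ?q" using cV by (simp add: of_nat_diff field_simps)
      finally show ?thesis .
    qed
    finally show ?thesis .
  qed
  have "Pi_pmf {..<Suc N} 0 (\<lambda>_. ?D) = map_pmf (\<lambda>(y,f). f(N:=y)) (pair_pmf ?D ?P)"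
    by (simp add: lessThan_Suc Pi_pmf_insert)
  then have "(\<integral>\<^sup>+\<omega>. ennreal (x ^ cnt sel \<omega> (Suc N)) \<partial>measure_pmf (Pi_pmf {..<Suc N} 0 (\<lambda>_. ?D)))
     = (\<integral>\<^sup>+f. \<integral>\<^sup>+y. ennreal (x ^ cnt sel (f(N:=y)) (Suc N)) \<partial>measure_pmf ?D \<partial>measure_pmf ?P)"
    by (simp add: pair_commute_pmf[of ?D] nn_integral_pair_pmf')
  also have "\<dots> = (\<integral>\<^sup>+f. ennreal (x ^ cnt sel f N) * ennreal ?q \<partial>measure_pmf ?P)"
  proof (rule nn_integral_cong)
    fix f
    have "(\<integral>\<^sup>+y. ennreal (x ^ cnt sel (f(N:=y)) (Suc N)) \<partial>measure_pmf ?D)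
        = (\<integral>\<^sup>+y. ennreal (x ^ cnt sel f N) * ennreal (x ^ (if y = sel f N then 1 else 0)) \<partial>measure_pmf ?D)"
      using x by (intro nn_integral_cong) (simp add: cnt_upd[OF na] power_add ennreal_mult)
    also have "\<dots> = ennreal (x ^ cnt sel f N) * ennreal ?q"
      by (subst nn_integral_cmult) (simp_all add: inner inV)
    finally show "(\<integral>\<^sup>+y. ennreal (x ^ cnt sel (f(N:=y)) (Suc N)) \<partial>measure_pmf ?D) = ennreal (x ^ cnt sel f N) * ennreal ?q" .
  qed
  also have "\<dots> = ennreal ((1 - (1 - x) / card V) ^ N) * ennreal ?q"
    by (subst nn_integral_multc) (simp_all add: Suc.IH)
  also have "\<dots> = ennreal (?q ^ Suc N)"
  proof -
    have "0 \<le> ?q" using x cV by (simp add: field_simps)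
    then show ?thesis by (simp add: ennreal_mult[symmetric] mult.commute)
  qed
  finally show ?case .
qed

lemma numeric:
  fixes n :: nat assumes "n > 0"
  shows "(2::real) ^ (3*n) * (1 - (1 - 1/2) / n) ^ (6*n*n) \<le> (2 / exp 1) ^ (3*n)"
proof -
  let ?q = "1 - (1 - 1/2) / real n"
  have q0: "0 \<le> ?q" using assms by (simp add: field_simps)
  have "?q \<le> exp (- (1/(2*n)))" using exp_ge_add_one_self[of "- (1/(2*n))"] by simp
  then have "?q ^ (6*n*n) \<le> exp (- (1/(2*n))) ^ (6*n*n)" using q0 by (intro power_mono) auto
  also have "\<dots> = exp (real (6*n*n) * (- (1/(2*n))))" by (subst exp_of_nat_mult) simp
  also have "real (6*n*n) * (- (1/(2*n))) = real (3*n) * (-1)" using assms by (simp add: field_simps)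
  also have "exp (real (3*n) * (-1)) = exp (-1) ^ (3*n)" by (subst exp_of_nat_mult) simp
  finally have "?q ^ (6*n*n) \<le> exp (-1) ^ (3*n)" .
  then have "2 ^ (3*n) * ?q ^ (6*n*n) \<le> 2 ^ (3*n) * exp (-1) ^ (3*n)" by (intro mult_left_mono) auto
  also have "\<dots> = (2 / exp 1) ^ (3*n)" by (simp add: power_mult_distrib[symmetric] exp_minus field_simps)
  finally show ?thesis .
qed

lemma tail:
  assumes V: "finite V" "V \<noteq> {}"
    and na: "\<And>\<omega> \<omega>' j. (\<forall>i<j. \<omega> i = \<omega>' i) \<Longrightarrow> sel \<omega> j = sel \<omega>' j"
    and inV: "\<And>\<omega> j. sel \<omega> j \<in> V"
  shows "measure_pmf.prob (Pi_pmf {..<6*card V*card V} 0 (\<lambda>_. pmf_of_set V))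
           {\<omega>. cnt sel \<omega> (6*card V*card V) < 3 * card V} \<le> (2 / exp 1) ^ (3 * card V)"
proof -
  let ?n = "card V"
  let ?N = "6*?n*?n"
  let ?M = "Pi_pmf {..<?N} 0 (\<lambda>_. pmf_of_set V)"
  let ?A = "{\<omega>. cnt sel \<omega> ?N < 3 * ?n}"
  have cV: "?n > 0" using V by (simp add: card_gt_0_iff)
  have "emeasure (measure_pmf ?M) ?A = (\<integral>\<^sup>+\<omega>. indicator ?A \<omega> \<partial>measure_pmf ?M)" by simp
  also have "\<dots> \<le> (\<integral>\<^sup>+\<omega>. ennreal (2 ^ (3*?n)) * ennreal ((1/2::real) ^ cnt sel \<omega> ?N) \<partial>measure_pmf ?M)"
  proof (rule nn_integral_mono)
    fix \<omega>
    show "indicator ?A \<omega> \<le> ennreal (2 ^ (3*?n)) * ennreal ((1/2::real) ^ cnt sel \<omega> ?N)"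
    proof (cases "\<omega> \<in> ?A")
      case True
      then have "cnt sel \<omega> ?N \<le> 3 * ?n" by simp
      then have "(2::real) ^ cnt sel \<omega> ?N \<le> 2 ^ (3*?n)" by (intro power_increasing) auto
      then have "1 \<le> (2::real) ^ (3*?n) * (1/2) ^ cnt sel \<omega> ?N" by (simp add: field_simps power_divide)
      then show ?thesis using True by (simp add: ennreal_mult[symmetric])
    qed simp
  qed
  also have "\<dots> = ennreal (2 ^ (3*?n)) * ennreal ((1 - (1 - 1/2) / ?n) ^ ?N)"
    by (subst nn_integral_cmult) (simp_all add: moment[OF V _ _ na inV])
  also have "\<dots> = ennreal (2 ^ (3*?n) * (1 - (1 - 1/2) / ?n) ^ ?N)"
    using cV by (subst ennreal_mult) (auto simp: field_simps)
  also have "\<dots> \<le> ennreal ((2 / exp 1) ^ (3 * ?n))" using numeric[OF cV] by (simp add: ennreal_leI)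
  finally have "ennreal (measure_pmf.prob ?M ?A) \<le> ennreal ((2 / exp 1) ^ (3 * ?n))"
    by (simp add: measure_pmf.emeasure_eq_measure)
  then show ?thesis by (subst (asm) ennreal_le_iff) auto
qed




lemma async_mono1: "async_informed exch nbrs s \<omega> j \<subseteq> async_informed exch nbrs s \<omega> (Suc j)"
  by (auto simp: Let_def)

lemma async_mono: "i \<le> j \<Longrightarrow> async_informed exch nbrs s \<omega> i \<subseteq> async_informed exch nbrs s \<omega> j"
  by (rule lift_Suc_mono_le[of "async_informed exch nbrs s \<omega>"]) (use async_mono1 in blast)+

lemma sync_mono1: "sync_informed exch nbrs s j \<subseteq> sync_informed exch nbrs s (Suc j)"
  by (auto simp: Let_def)

lemma sync_mono: "i \<le> j \<Longrightarrow> sync_informed exch nbrs s i \<subseteq> sync_informed exch nbrs s j"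
  by (rule lift_Suc_mono_le[of "sync_informed exch nbrs s"]) (use sync_mono1 in blast)+

lemma s_async: "s \<in> async_informed exch nbrs s \<omega> j"
  using async_mono[of 0 j] by auto

lemma card_Suc_split: "card {i. i < Suc j \<and> \<omega> i = v} = card {i. i < j \<and> \<omega> i = v} + (if \<omega> j = v then 1 else 0)"
proof -
  have "{i. i < Suc j \<and> \<omega> i = v} = {i. i < j \<and> \<omega> i = v} \<union> (if \<omega> j = v then {j} else {})"
    by (auto simp: less_Suc_eq)
  then show ?thesis by (auto simp: card_insert_if)
qed

lemma async_push:
  assumes "nbrs v \<noteq> []" "v \<in> async_informed exch nbrs s \<omega> t0"
  shows "t0 \<le> j \<Longrightarrow> card {i. i<t0 \<and> \<omega> i = v} \<le> r \<Longrightarrow> r < card {i. i<j \<and> \<omega> i = v}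
     \<Longrightarrow> rr_partner nbrs v r \<in> async_informed exch nbrs s \<omega> j"
proof (induction j)
  case 0
  then show ?case by simp
next
  case (Suc j)
  show ?case
  proof (cases "t0 = Suc j")
    case True
    then show ?thesis using Suc.prems by simp
  next
    case False
    then have tj: "t0 \<le> j" using Suc.prems by simp
    have vI: "v \<in> async_informed exch nbrs s \<omega> j" using assms(2) async_mono[OF tj, of exch nbrs s \<omega>] by auto
    show ?thesis
    proof (cases "r < card {i. i<j \<and> \<omega> i = v}")
      case True
      then show ?thesis using Suc.IH[OF tj Suc.prems(2)] async_mono1 by blast
    next
      case False
      then have "\<omega> j = v" "r = card {i. i<j \<and> \<omega> i = v}" using Suc.prems(3) by (auto simp: card_Suc_split split: if_splits)
      then show ?thesis using vI assms(1) by (simp add: Let_def)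
    qed
  qed
qed

lemma sync_push:
  assumes "nbrs v \<noteq> []" "v \<in> sync_informed exch nbrs s t0"
  shows "t0 \<le> r \<Longrightarrow> r < t \<Longrightarrow> rr_partner nbrs v r \<in> sync_informed exch nbrs s t"
proof (induction t)
  case 0
  then show ?case by simp
next
  case (Suc t)
  show ?case
  proof (cases "r < t")
    case True
    then show ?thesis using Suc sync_mono1 by blast
  next
    case False
    then have "r = t" using Suc.prems by simp
    moreover have "v \<in> sync_informed exch nbrs s t" using assms(2) sync_mono[of t0 t] Suc.prems \<open>r = t\<close> by auto
    ultimately show ?thesis using assms(1) by (auto simp: Let_def)
  qed
qed

lemma residue: "(d::nat) > 0 \<Longrightarrow> idx < d \<Longrightarrow> \<exists>r. c0 \<le> r \<and> r < c0 + d \<and> r mod d = idx"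
proof -
  assume d: "d > 0" "idx < d"
  let ?r = "c0 + (idx + d - c0 mod d) mod d"
  have "?r mod d = (c0 mod d + (idx + d - c0 mod d)) mod d" by (metis mod_add_left_eq mod_add_right_eq)
  also have "c0 mod d + (idx + d - c0 mod d) = idx + d" using d mod_less_divisor[of d c0] by linarith
  finally have "?r mod d = idx" using d by simp
  moreover have "?r < c0 + d" using d by simp
  ultimately show ?thesis by (intro exI[of _ ?r]) auto
qed

lemma cover:
  assumes "u \<in> set (nbrs v)" "c0 + length (nbrs v) \<le> c1"
    "\<And>r. c0 \<le> r \<Longrightarrow> r < c1 \<Longrightarrow> rr_partner nbrs v r \<in> X"
  shows "u \<in> X"
proof -
  obtain idx where idx: "idx < length (nbrs v)" "nbrs v ! idx = u" using assms(1) by (auto simp: in_set_conv_nth)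
  then have "length (nbrs v) > 0" by linarith
  from residue[OF this idx(1)] obtain r where "c0 \<le> r" "r < c0 + length (nbrs v)" "r mod length (nbrs v) = idx" by blast
  then show ?thesis using assms(2) assms(3)[of r] idx by (auto simp: rr_partner_def)
qed




lemma path_exists:
  "(s,w) \<in> E^^m \<Longrightarrow> (\<forall>m'<m. (s,w) \<notin> E^^m') \<Longrightarrow>
   \<exists>p. p 0 = s \<and> p m = w \<and> (\<forall>i<m. (p i, p (Suc i)) \<in> E) \<and> (\<forall>i\<le>m. \<forall>m'<i. (s, p i) \<notin> E^^m')"
proof (induction m arbitrary: w)
  case 0
  then show ?case by (intro exI[of _ "\<lambda>_. s"]) auto
next
  case (Suc m)
  from Suc.prems(1) obtain y where y: "(s,y) \<in> E^^m" "(y,w) \<in> E" by auto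
  have "\<forall>m'<m. (s,y) \<notin> E^^m'"
  proof (intro allI impI notI)
    fix m' assume "m' < m" "(s,y) \<in> E^^m'"
    then have "(s,w) \<in> E^^(Suc m')" using y(2) by (meson relpow_Suc_I)
    then show False using Suc.prems(2) \<open>m' < m\<close> Suc_mono by blast
  qed
  from Suc.IH[OF y(1) this] obtain p where p: "p 0 = s" "p m = y" "\<forall>i<m. (p i, p (Suc i)) \<in> E"
    "\<forall>i\<le>m. \<forall>m'<i. (s, p i) \<notin> E^^m'" by blast
  let ?p = "p(Suc m := w)"
  show ?case
  proof (intro exI[of _ ?p] conjI allI impI)
    show "?p 0 = s" using p by simp
    show "?p (Suc m) = w" by simp
    fix i assume "i < Suc m" then show "(?p i, ?p (Suc i)) \<in> E" using p y by (auto simp: less_Suc_eq)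
  next
    fix i m' assume "i \<le> Suc m" "m' < i"
    then show "(s, ?p i) \<notin> E^^m'" using p Suc.prems(2) by (cases "i = Suc m") auto
  qed
qed

lemma path_reach: "p 0 = s \<Longrightarrow> (\<forall>i<m. (p i, p (Suc i)) \<in> E) \<Longrightarrow> i \<le> m \<Longrightarrow> (s, p i) \<in> E^^i"
  by (induction i) auto

lemma deg_three:
  assumes p: "p 0 = s" "\<forall>i<k. (p i, p (Suc i)) \<in> E" "\<forall>i\<le>k. \<forall>m'<i. (s, p i) \<notin> E^^m'"
    and symE: "sym E"
  shows "card {i. i < k \<and> (p i, u) \<in> E} \<le> 3"
proof (cases "{i. i < k \<and> (p i, u) \<in> E} = {}")
  case True then show ?thesis by (metis card.empty le0)
next
  case False
  let ?S = "{i. i < k \<and> (p i, u) \<in> E}"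
  have fin: "finite ?S" by simp
  let ?a = "Min ?S"
  have a: "?a \<in> ?S" using Min_in[OF fin False] .
  have "?S \<subseteq> {?a, ?a+1, ?a+2}"
  proof
    fix i assume i: "i \<in> ?S"
    have ai: "?a \<le> i" using Min_le[OF fin i] .
    have "\<not> ?a + 3 \<le> i"
    proof
      assume h: "?a + 3 \<le> i"
      have "(s, p ?a) \<in> E^^?a" using path_reach[OF p(1,2)] a by auto
      moreover have "(p ?a, u) \<in> E" using a by auto
      moreover have "(u, p i) \<in> E" using i symE by (auto dest: symD)
      ultimately have "(s, p i) \<in> E^^(Suc (Suc ?a))" by (meson relpow_Suc_I)
      moreover have "Suc (Suc ?a) < i" using h by simp
      moreover have "i \<le> k" using i by simp
      ultimately show False using p(3) by blast
    qed
    then show "i \<in> {?a, ?a+1, ?a+2}" using ai by auto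
  qed
  then have "card ?S \<le> card {?a, ?a+1, ?a+2}" by (intro card_mono) auto
  also have "\<dots> \<le> 3" by (rule order_trans[OF card_insert_le_m1]) (auto simp: card_insert_if)
  finally show ?thesis .
qed

lemma deg_sum:
  assumes p: "p 0 = s" "\<forall>i<k. (p i, p (Suc i)) \<in> E" "\<forall>i\<le>k. \<forall>m'<i. (s, p i) \<notin> E^^m'"
    and symE: "sym E" and EV: "E \<subseteq> V \<times> V" and fin: "finite V"
  shows "(\<Sum>i<k. card {u. (p i, u) \<in> E}) \<le> 3 * card V"
proof -
  have "(\<Sum>i<k. card {u. (p i, u) \<in> E}) = (\<Sum>i<k. \<Sum>u\<in>V. if (p i, u) \<in> E then 1 else 0)"
  proof (rule sum.cong[OF refl])
    fix i
    have "{u. (p i, u) \<in> E} = {u\<in>V. (p i, u) \<in> E}" using EV by auto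
    then show "card {u. (p i, u) \<in> E} = (\<Sum>u\<in>V. if (p i, u) \<in> E then 1 else 0)"
      using fin by (auto simp: sum.If_cases intro!: arg_cong[where f=card])
  qed
  also have "\<dots> = (\<Sum>u\<in>V. \<Sum>i<k. if (p i, u) \<in> E then 1 else 0)" by (rule sum.swap)
  also have "\<dots> = (\<Sum>u\<in>V. card {i. i < k \<and> (p i, u) \<in> E})"
  proof (rule sum.cong[OF refl])
    fix u
    have "{i. i < k \<and> (p i, u) \<in> E} = {i\<in>{..<k}. (p i, u) \<in> E}" by auto
    then show "(\<Sum>i<k. if (p i, u) \<in> E then 1 else 0) = card {i. i < k \<and> (p i, u) \<in> E}"
    proof -
      have "{..<k} \<inter> {i. (p i, u) \<in> E} = {i. i<k \<and> (p i,u)\<in>E}" by auto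
      then show ?thesis by (simp add: sum.If_cases)
    qed
  qed
  also have "\<dots> \<le> (\<Sum>u\<in>V. 3)" by (intro sum_mono deg_three[OF p symE])
  finally show ?thesis by simp
qed




locale pathsetup =
  fixes exch :: bool and nbrs :: "nat \<Rightarrow> nat list" and s :: nat and p :: "nat \<Rightarrow> nat" and k :: nat
  assumes p0: "p 0 = s"
    and pn: "\<And>i. i < k \<Longrightarrow> p (Suc i) \<in> set (nbrs (p i))"
begin

definition I :: "(nat \<Rightarrow> nat) \<Rightarrow> nat \<Rightarrow> nat set" where "I \<omega> j = async_informed exch nbrs s \<omega> j"
definition cv :: "(nat \<Rightarrow> nat) \<Rightarrow> nat \<Rightarrow> nat \<Rightarrow> nat" where "cv \<omega> v j = card {i. i < j \<and> \<omega> i = v}"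
definition Tm :: "(nat \<Rightarrow> nat) \<Rightarrow> nat \<Rightarrow> nat \<Rightarrow> nat" where "Tm \<omega> v j = (LEAST t. t \<le> j \<and> v \<in> I \<omega> t)"
definition prog :: "(nat \<Rightarrow> nat) \<Rightarrow> nat \<Rightarrow> nat \<Rightarrow> nat" where "prog \<omega> v j = cv \<omega> v j - cv \<omega> v (Tm \<omega> v j)"
definition sat :: "(nat \<Rightarrow> nat) \<Rightarrow> nat \<Rightarrow> nat \<Rightarrow> bool" where "sat \<omega> i j \<longleftrightarrow> p i \<in> I \<omega> j \<and> length (nbrs (p i)) \<le> prog \<omega> (p i) j"
definition sel :: "(nat \<Rightarrow> nat) \<Rightarrow> nat \<Rightarrow> nat" where "sel \<omega> j = (if \<exists>i<k. \<not> sat \<omega> i j then p (LEAST i. i < k \<and> \<not> sat \<omega> i j) else s)"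
definition trm :: "(nat \<Rightarrow> nat) \<Rightarrow> nat \<Rightarrow> nat \<Rightarrow> nat" where "trm \<omega> i j = (if p i \<in> I \<omega> j then min (length (nbrs (p i))) (prog \<omega> (p i) j) else 0)"
definition Phi :: "(nat \<Rightarrow> nat) \<Rightarrow> nat \<Rightarrow> nat" where "Phi \<omega> j = (\<Sum>i<k. trm \<omega> i j)"

lemma I_mono: "t \<le> j \<Longrightarrow> I \<omega> t \<subseteq> I \<omega> j"
  unfolding I_def by (rule async_mono)

lemma cv_mono: "t \<le> j \<Longrightarrow> cv \<omega> v t \<le> cv \<omega> v j"
  unfolding cv_def by (rule card_mono) auto

lemma Tm_props: assumes "v \<in> I \<omega> j" shows "Tm \<omega> v j \<le> j" "v \<in> I \<omega> (Tm \<omega> v j)"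
proof -
  have "Tm \<omega> v j \<le> j \<and> v \<in> I \<omega> (Tm \<omega> v j)" unfolding Tm_def
    by (rule LeastI[of _ j]) (use assms in auto)
  then show "Tm \<omega> v j \<le> j" "v \<in> I \<omega> (Tm \<omega> v j)" by auto
qed

lemma Tm_Suc: assumes "v \<in> I \<omega> j" shows "Tm \<omega> v (Suc j) = Tm \<omega> v j"
proof -
  note T = Tm_props[OF assms]
  show ?thesis unfolding Tm_def[of _ _ "Suc j"]
  proof (rule Least_equality)
    show "Tm \<omega> v j \<le> Suc j \<and> v \<in> I \<omega> (Tm \<omega> v j)" using T by auto
    fix y assume y: "y \<le> Suc j \<and> v \<in> I \<omega> y"
    show "Tm \<omega> v j \<le> y"
    proof (cases "y \<le> j")
      case True then show ?thesis using y unfolding Tm_def by (intro Least_le) auto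
    next
      case False then show ?thesis using T by auto
    qed
  qed
qed

lemma sat_next: assumes "i < k" "sat \<omega> i j" shows "p (Suc i) \<in> I \<omega> j"
proof -
  have pi: "p i \<in> I \<omega> j" and pr: "length (nbrs (p i)) \<le> prog \<omega> (p i) j" using assms(2) by (auto simp: sat_def)
  let ?t0 = "Tm \<omega> (p i) j"
  note T = Tm_props[OF pi]
  have ne: "nbrs (p i) \<noteq> []" using pn[OF assms(1)] by auto
  have le: "cv \<omega> (p i) ?t0 \<le> cv \<omega> (p i) j" using cv_mono[OF T(1)] .
  show ?thesis
  proof (rule cover[of "p (Suc i)" nbrs "p i" "cv \<omega> (p i) ?t0" "cv \<omega> (p i) j"])
    show "p (Suc i) \<in> set (nbrs (p i))" using pn[OF assms(1)] .
    show "cv \<omega> (p i) ?t0 + length (nbrs (p i)) \<le> cv \<omega> (p i) j" using pr le by (simp add: prog_def)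
    fix r assume "cv \<omega> (p i) ?t0 \<le> r" "r < cv \<omega> (p i) j"
    then show "rr_partner nbrs (p i) r \<in> I \<omega> j"
      using async_push[OF ne T(2)[unfolded I_def] T(1)] by (simp add: cv_def I_def)
  qed
qed

lemma s_I: "s \<in> I \<omega> j" unfolding I_def by (rule s_async)

lemma cur_inf: "i \<le> k \<Longrightarrow> (\<forall>i'<i. sat \<omega> i' j) \<Longrightarrow> p i \<in> I \<omega> j"
proof (induction i)
  case 0 then show ?case using s_I p0 by simp
next
  case (Suc i) then show ?case using sat_next[of i \<omega> j] by simp
qed

lemma trm_le: "trm \<omega> i j \<le> length (nbrs (p i))" by (simp add: trm_def)

lemma trm_mono: "trm \<omega> i j \<le> trm \<omega> i (Suc j)"
proof (cases "p i \<in> I \<omega> j")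
  case True
  then have "p i \<in> I \<omega> (Suc j)" using I_mono[of j "Suc j" \<omega>] by auto
  moreover have "prog \<omega> (p i) j \<le> prog \<omega> (p i) (Suc j)"
    unfolding prog_def Tm_Suc[OF True] using cv_mono[of j "Suc j" \<omega> "p i"] by simp
  ultimately show ?thesis using True by (auto simp: trm_def)
qed (simp add: trm_def)

lemma trm_step:
  assumes "\<omega> j = p i" "p i \<in> I \<omega> j" "prog \<omega> (p i) j < length (nbrs (p i))"
  shows "trm \<omega> i (Suc j) = trm \<omega> i j + 1"
proof -
  have S: "p i \<in> I \<omega> (Suc j)" using assms(2) I_mono[of j "Suc j" \<omega>] by auto
  have "cv \<omega> (p i) (Suc j) = cv \<omega> (p i) j + 1" using assms(1) by (simp add: cv_def card_Suc_split)
  moreover have "cv \<omega> (p i) (Tm \<omega> (p i) j) \<le> cv \<omega> (p i) j" using cv_mono Tm_props(1)[OF assms(2)] by blast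
  ultimately have "prog \<omega> (p i) (Suc j) = prog \<omega> (p i) j + 1"
    unfolding prog_def Tm_Suc[OF assms(2)] by simp
  then show ?thesis using assms(2,3) S by (simp add: trm_def)
qed

lemma Phi_step:
  "Phi \<omega> j + (if \<omega> j = sel \<omega> j \<and> (\<exists>i<k. \<not> sat \<omega> i j) then 1 else 0) \<le> Phi \<omega> (Suc j)"
proof (cases "\<omega> j = sel \<omega> j \<and> (\<exists>i<k. \<not> sat \<omega> i j)")
  case False
  have "Phi \<omega> j \<le> Phi \<omega> (Suc j)" unfolding Phi_def by (intro sum_mono trm_mono)
  moreover have "(if \<omega> j = sel \<omega> j \<and> (\<exists>i<k. \<not> sat \<omega> i j) then 1 else 0) = (0::nat)"
    using False by (rule if_not_P)
  ultimately show ?thesis by linarith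
next
  case True
  let ?i = "LEAST i. i < k \<and> \<not> sat \<omega> i j"
  have ex: "\<exists>i. i < k \<and> \<not> sat \<omega> i j" using True by blast
  have i0: "?i < k \<and> \<not> sat \<omega> ?i j" using ex by (rule LeastI_ex)
  have before: "\<forall>i'<?i. sat \<omega> i' j"
  proof (intro allI impI)
    fix i' assume "i' < ?i"
    then have "\<not> (i' < k \<and> \<not> sat \<omega> i' j)" by (rule not_less_Least)
    then show "sat \<omega> i' j" using \<open>i' < ?i\<close> i0 by linarith
  qed
  have inf: "p ?i \<in> I \<omega> j" using cur_inf[OF _ before] i0 by simp
  have pr: "prog \<omega> (p ?i) j < length (nbrs (p ?i))" using i0 inf unfolding sat_def by linarith
  have "sel \<omega> j = p ?i" unfolding sel_def using ex by (simp only: if_P)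
  then have wj: "\<omega> j = p ?i" using True by simp
  have st: "trm \<omega> ?i (Suc j) = trm \<omega> ?i j + 1" by (rule trm_step[OF wj inf pr])
  have "Phi \<omega> j + 1 = trm \<omega> ?i j + 1 + (\<Sum>i\<in>{..<k} - {?i}. trm \<omega> i j)"
    unfolding Phi_def using i0 by (subst sum.remove[of _ ?i]) simp_all
  also have "\<dots> \<le> trm \<omega> ?i (Suc j) + (\<Sum>i\<in>{..<k} - {?i}. trm \<omega> i (Suc j))"
  proof -
    have "(\<Sum>i\<in>{..<k} - {?i}. trm \<omega> i j) \<le> (\<Sum>i\<in>{..<k} - {?i}. trm \<omega> i (Suc j))"
      by (intro sum_mono trm_mono)
    then show ?thesis using st by linarith
  qed
  also have "\<dots> = Phi \<omega> (Suc j)"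
    unfolding Phi_def using i0 by (subst sum.remove[of _ ?i]) simp_all
  finally show ?thesis by (simp only: if_P[OF True])
qed

lemma card_Suc_P: "card {j. j < Suc N \<and> P j} = card {j. j < N \<and> P j} + (if P N then 1 else 0)"
proof -
  have "{j. j < Suc N \<and> P j} = {j. j < N \<and> P j} \<union> (if P N then {N} else {})"
    by (auto simp: less_Suc_eq)
  then show ?thesis by (auto simp: card_insert_if)
qed

lemma count_le: "card {j. j < N \<and> \<omega> j = sel \<omega> j \<and> (\<exists>i<k. \<not> sat \<omega> i j)} \<le> Phi \<omega> N"
proof (induction N)
  case 0 then show ?case by simp
next
  case (Suc N)
  have "card {j. j < Suc N \<and> (\<omega> j = sel \<omega> j \<and> (\<exists>i<k. \<not> sat \<omega> i j))} =
       card {j. j < N \<and> (\<omega> j = sel \<omega> j \<and> (\<exists>i<k. \<not> sat \<omega> i j))} +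
       (if \<omega> N = sel \<omega> N \<and> (\<exists>i<k. \<not> sat \<omega> i N) then 1 else 0)"
    by (rule card_Suc_P)
  then show ?case using Suc.IH Phi_step[of \<omega> N] by linarith
qed

lemma cnt_bound:
  assumes "p k \<notin> I \<omega> N"
  shows "cnt sel \<omega> N < (\<Sum>i<k. length (nbrs (p i)))"
proof -
  have k0: "k > 0"
  proof (rule ccontr)
    assume "\<not> k > 0" then have "k = 0" by simp
    then show False using assms s_I[of \<omega> N] p0 by simp
  qed
  have notall: "\<exists>i<k. \<not> sat \<omega> i j" if "j \<le> N" for j
  proof (rule ccontr)
    assume "\<not> (\<exists>i<k. \<not> sat \<omega> i j)"
    then have "sat \<omega> (k - 1) j" using k0 by (meson diff_less zero_less_one)
    then have "p k \<in> I \<omega> j" using sat_next[of "k-1" \<omega> j] k0 by simp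
    then show False using assms I_mono[OF that, of \<omega>] by blast
  qed
  have "cnt sel \<omega> N = card {j. j < N \<and> \<omega> j = sel \<omega> j \<and> (\<exists>i<k. \<not> sat \<omega> i j)}"
  proof -
    have nn: "\<And>j. j < N \<Longrightarrow> (\<exists>i<k. \<not> sat \<omega> i j)" using notall by simp
    have "{j. j < N \<and> \<omega> j = sel \<omega> j} = {j. j < N \<and> \<omega> j = sel \<omega> j \<and> (\<exists>i<k. \<not> sat \<omega> i j)}"
      using nn by blast
    then show ?thesis unfolding cnt_def by simp
  qed
  also have "\<dots> \<le> Phi \<omega> N" by (rule count_le)
  also have "Phi \<omega> N < (\<Sum>i<k. length (nbrs (p i)))" unfolding Phi_def
  proof (rule sum_strict_mono_ex1)
    show "\<forall>x\<in>{..<k}. trm \<omega> x N \<le> length (nbrs (p x))" using trm_le by blast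
    show "\<exists>a\<in>{..<k}. trm \<omega> a N < length (nbrs (p a))"
    proof (rule ccontr)
      assume "\<not> ?thesis"
      moreover have "k-1 \<in> {..<k}" using k0 by simp
      ultimately have h: "trm \<omega> (k-1) N \<ge> length (nbrs (p (k-1)))" by (meson not_le)
      have "nbrs (p (k-1)) \<noteq> []" using pn[of "k-1"] k0 by auto
      then have lp: "length (nbrs (p (k-1))) > 0" by simp
      have pin: "p (k-1) \<in> I \<omega> N"
      proof (rule ccontr)
        assume "p (k-1) \<notin> I \<omega> N"
        then have "trm \<omega> (k-1) N = 0" by (simp add: trm_def)
        then show False using h lp by linarith
      qed
      then have "min (length (nbrs (p (k-1)))) (prog \<omega> (p (k-1)) N) \<ge> length (nbrs (p (k-1)))"
        using h by (simp add: trm_def)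
      then have "sat \<omega> (k-1) N" using pin by (simp add: sat_def)
      then have "p (Suc (k-1)) \<in> I \<omega> N" using k0 by (intro sat_next) simp_all
      then show False using k0 assms by simp
    qed
  qed simp
  finally show ?thesis .
qed

lemma I_agree: "(\<forall>i<j. \<omega> i = \<omega>' i) \<Longrightarrow> t \<le> j \<Longrightarrow> I \<omega> t = I \<omega>' t"
proof (induction t)
  case 0 then show ?case by (simp add: I_def)
next
  case (Suc t)
  have e: "\<omega> t = \<omega>' t" using Suc.prems by auto
  have c: "\<And>u. {i. i < t \<and> \<omega> i = u} = {i. i < t \<and> \<omega>' i = u}" using Suc.prems by auto
  have ih: "async_informed exch nbrs s \<omega> t = async_informed exch nbrs s \<omega>' t"
    using Suc.IH Suc.prems unfolding I_def by simp
  show ?case unfolding I_def async_informed.simps ih e c ..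
qed

lemma sel_na: "(\<forall>i<j. \<omega> i = \<omega>' i) \<Longrightarrow> sel \<omega> j = sel \<omega>' j"
proof -
  assume a: "\<forall>i<j. \<omega> i = \<omega>' i"
  have Ie: "\<And>t. t \<le> j \<Longrightarrow> I \<omega> t = I \<omega>' t" using I_agree[OF a] by blast
  have ce: "cv \<omega> v t = cv \<omega>' v t" if "t \<le> j" for v t
  proof -
    have "{i. i < t \<and> \<omega> i = v} = {i. i < t \<and> \<omega>' i = v}" using a that by force
    then show ?thesis unfolding cv_def by simp
  qed
  have Te: "Tm \<omega> v j = Tm \<omega>' v j" for v
  proof -
    have "(\<lambda>t. t \<le> j \<and> v \<in> I \<omega> t) = (\<lambda>t. t \<le> j \<and> v \<in> I \<omega>' t)"
    proof
      fix t show "(t \<le> j \<and> v \<in> I \<omega> t) = (t \<le> j \<and> v \<in> I \<omega>' t)" using Ie[of t] by blast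
    qed
    then show "Tm \<omega> v j = Tm \<omega>' v j" unfolding Tm_def by simp
  qed
  have se: "sat \<omega> i j = sat \<omega>' i j" for i
  proof (cases "p i \<in> I \<omega> j")
    case True
    have "Tm \<omega> (p i) j \<le> j" using Tm_props(1)[OF True] .
    then have "prog \<omega> (p i) j = prog \<omega>' (p i) j" unfolding prog_def Te
      using ce[of "Tm \<omega>' (p i) j" "p i"] ce[of j "p i"] Te[of "p i"] by simp
    then show ?thesis using Ie[of j] by (simp add: sat_def)
  next
    case False then show ?thesis using Ie[of j] by (simp add: sat_def)
  qed
  show ?thesis unfolding sel_def se ..
qed

end




lemma sync_path:
  assumes p0: "p 0 = s" and pn: "\<And>i. i < k \<Longrightarrow> p (Suc i) \<in> set (nbrs (p i))"
  shows "i \<le> k \<Longrightarrow> p i \<in> sync_informed exch nbrs s (\<Sum>i'<i. length (nbrs (p i')))"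
proof (induction i)
  case 0 then show ?case using p0 by simp
next
  case (Suc i)
  let ?S = "\<Sum>i'<i. length (nbrs (p i'))"
  have ik: "i < k" using Suc.prems by simp
  have pi: "p i \<in> sync_informed exch nbrs s ?S" using Suc.IH ik by simp
  have ne: "nbrs (p i) \<noteq> []" using pn[OF ik] by auto
  show ?case
  proof (rule cover[of "p (Suc i)" nbrs "p i" ?S])
    show "p (Suc i) \<in> set (nbrs (p i))" using pn[OF ik] .
    show "?S + length (nbrs (p i)) \<le> (\<Sum>i'<Suc i. length (nbrs (p i')))" by simp
    fix r assume "?S \<le> r" "r < (\<Sum>i'<Suc i. length (nbrs (p i')))"
    then show "rr_partner nbrs (p i) r \<in> sync_informed exch nbrs s (\<Sum>i'<Suc i. length (nbrs (p i')))"
      using sync_push[OF ne pi] by blast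
  qed
qed

lemma path_props:
  assumes sg: "simple_graph V E" and cg: "connected_graph V E" and rr: "rr_lists E nbrs"
    and sV: "s \<in> V" and wV: "w \<in> V"
  shows "\<exists>p k. p 0 = s \<and> p k = w \<and> (\<forall>i<k. p (Suc i) \<in> set (nbrs (p i)))
     \<and> (\<forall>i\<le>k. p i \<in> V) \<and> (\<Sum>i<k. length (nbrs (p i))) \<le> 3 * card V"
proof -
  have finV: "finite V" and EV: "E \<subseteq> V \<times> V" and symE: "sym E" using sg by (auto simp: simple_graph_def)
  have "(s,w) \<in> E\<^sup>*" using cg sV wV by (auto simp: connected_graph_def)
  then obtain m0 where "(s,w) \<in> E^^m0" by (auto simp: rtrancl_power)
  let ?m = "LEAST m. (s,w) \<in> E^^m"
  have m1: "(s,w) \<in> E^^?m" by (rule LeastI) fact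
  have m2: "\<forall>m'<?m. (s,w) \<notin> E^^m'" using not_less_Least by blast
  obtain p where p: "p 0 = s" "p ?m = w" "\<forall>i<?m. (p i, p (Suc i)) \<in> E" "\<forall>i\<le>?m. \<forall>m'<i. (s, p i) \<notin> E^^m'"
    using path_exists[OF m1 m2] by blast
  have len: "length (nbrs v) = card {u. (v,u) \<in> E}" for v
    using rr by (simp add: rr_lists_def distinct_card[symmetric])
  have pn: "\<forall>i<?m. p (Suc i) \<in> set (nbrs (p i))" using p(3) rr by (simp add: rr_lists_def)
  have pV: "\<forall>i\<le>?m. p i \<in> V"
  proof (intro allI impI)
    fix i assume "i \<le> ?m"
    then show "p i \<in> V"
    proof (cases i)
      case 0 then show ?thesis using p sV by simp
    next
      case (Suc i')
      then have "i' < ?m" using \<open>i \<le> ?m\<close> by simp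
      then have "(p i', p i) \<in> E" using p(3) Suc by simp
      then show ?thesis using EV by blast
    qed
  qed
  have "(\<Sum>i<?m. length (nbrs (p i))) = (\<Sum>i<?m. card {u. (p i,u) \<in> E})" by (simp add: len)
  also have "\<dots> \<le> 3 * card V" by (rule deg_sum[OF p(1,3,4) symE EV finV])
  finally show ?thesis using p pn pV by blast
qed

lemma async_part:
  assumes sg: "simple_graph V E" and cg: "connected_graph V E" and rr: "rr_lists E nbrs"
    and sV: "s \<in> V" and wV: "w \<in> V"
  shows "\<exists>sel. (\<forall>\<omega> \<omega>' j. (\<forall>i<j. \<omega> i = \<omega>' i) \<longrightarrow> sel \<omega> j = sel \<omega>' j) \<and> (\<forall>\<omega> j. sel \<omega> j \<in> V)
     \<and> (\<forall>\<omega>. w \<notin> async_informed exch nbrs s \<omega> N \<longrightarrow> cnt sel \<omega> N < 3 * card V)"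
proof -
  obtain p k where p: "p 0 = s" "p k = w" "\<forall>i<k. p (Suc i) \<in> set (nbrs (p i))"
     "\<forall>i\<le>k. p i \<in> V" "(\<Sum>i<k. length (nbrs (p i))) \<le> 3 * card V"
    using path_props[OF assms] by blast
  interpret P: pathsetup exch nbrs s p k using p by unfold_locales auto
  show ?thesis
  proof (intro exI[of _ P.sel] conjI allI impI)
    fix \<omega> \<omega>' :: "nat \<Rightarrow> nat" and j :: nat assume "\<forall>i<j. \<omega> i = \<omega>' i" then show "P.sel \<omega> j = P.sel \<omega>' j" by (rule P.sel_na)
  next
    fix \<omega> :: "nat \<Rightarrow> nat" and j :: nat
    have "(LEAST i. i < k \<and> \<not> P.sat \<omega> i j) < k" if "\<exists>i<k. \<not> P.sat \<omega> i j"
      using LeastI_ex[of "\<lambda>i. i < k \<and> \<not> P.sat \<omega> i j"] that by blast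
    then show "P.sel \<omega> j \<in> V" unfolding P.sel_def using p(4) sV by (auto intro: less_imp_le)
  next
    fix \<omega> :: "nat \<Rightarrow> nat" assume "w \<notin> async_informed exch nbrs s \<omega> N"
    then have "p k \<notin> P.I \<omega> N" using p(2) by (simp add: P.I_def)
    then show "cnt P.sel \<omega> N < 3 * card V" using P.cnt_bound p(5) by fastforce
  qed
qed

theorem theorem5:
  "\<exists>C::nat. \<forall>V E nbrs s exch.
     simple_graph V E \<and> connected_graph V E \<and> rr_lists E nbrs \<and> s \<in> V \<longrightarrow>
       V \<subseteq> sync_informed exch nbrs s (C * card V)
     \<and> measure_pmf.prob (async_schedule V (C * card V * card V))
         {\<omega>. V \<subseteq> async_informed exch nbrs s \<omega> (C * card V * card V)}
       \<ge> 1 - real (card V) * (2 / exp 1) ^ (3 * card V)"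
proof (intro exI[of _ 6] allI impI conjI)
  fix V E nbrs s exch
  assume A: "simple_graph V E \<and> connected_graph V E \<and> rr_lists E nbrs \<and> s \<in> V"
  then have sg: "simple_graph V E" and cg: "connected_graph V E" and rr: "rr_lists E nbrs" and sV: "s \<in> V" by auto
  have finV: "finite V" using sg by (simp add: simple_graph_def)
  have ne: "V \<noteq> {}" using sV by auto
  show "V \<subseteq> sync_informed exch nbrs s (6 * card V)"
  proof
    fix w assume wV: "w \<in> V"
    obtain p k where p: "p 0 = s" "p k = w" "\<forall>i<k. p (Suc i) \<in> set (nbrs (p i))"
       "\<forall>i\<le>k. p i \<in> V" "(\<Sum>i<k. length (nbrs (p i))) \<le> 3 * card V"
      using path_props[OF sg cg rr sV wV] by blast
    have "w \<in> sync_informed exch nbrs s (\<Sum>i<k. length (nbrs (p i)))"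
      using sync_path[of p s k nbrs k exch] p by auto
    moreover have "(\<Sum>i<k. length (nbrs (p i))) \<le> 6 * card V" using p(5) by simp
    ultimately show "w \<in> sync_informed exch nbrs s (6 * card V)" using sync_mono by blast
  qed
  let ?N = "6 * card V * card V"
  let ?M = "async_schedule V ?N"
  have "\<forall>w\<in>V. \<exists>sel. (\<forall>\<omega> \<omega>' j. (\<forall>i<j. \<omega> i = \<omega>' i) \<longrightarrow> sel \<omega> j = sel \<omega>' j) \<and> (\<forall>\<omega> j. sel \<omega> j \<in> V)
     \<and> (\<forall>\<omega>. w \<notin> async_informed exch nbrs s \<omega> ?N \<longrightarrow> cnt sel \<omega> ?N < 3 * card V)"
    using async_part[OF sg cg rr sV] by blast
  then obtain S where S: "\<And>w. w \<in> V \<Longrightarrow> (\<forall>\<omega> \<omega>' j. (\<forall>i<j. \<omega> i = \<omega>' i) \<longrightarrow> S w \<omega> j = S w \<omega>' j) \<and> (\<forall>\<omega> j. S w \<omega> j \<in> V)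
     \<and> (\<forall>\<omega>. w \<notin> async_informed exch nbrs s \<omega> ?N \<longrightarrow> cnt (S w) \<omega> ?N < 3 * card V)"
    by metis
  let ?A = "\<lambda>w. {\<omega>. cnt (S w) \<omega> ?N < 3 * card V}"
  let ?G = "{\<omega>. V \<subseteq> async_informed exch nbrs s \<omega> ?N}"
  have sub: "UNIV - ?G \<subseteq> (\<Union>w\<in>V. ?A w)" using S by blast
  have "measure_pmf.prob ?M (UNIV - ?G) \<le> measure_pmf.prob ?M (\<Union>w\<in>V. ?A w)"
    using sub by (intro measure_pmf.finite_measure_mono) auto
  also have "\<dots> \<le> (\<Sum>w\<in>V. measure_pmf.prob ?M (?A w))"
    using finV by (intro measure_pmf.finite_measure_subadditive_finite) auto
  also have "\<dots> \<le> (\<Sum>w\<in>V. (2 / exp 1) ^ (3 * card V))"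
  proof (rule sum_mono)
    fix w assume wV: "w \<in> V"
    show "measure_pmf.prob ?M (?A w) \<le> (2 / exp 1) ^ (3 * card V)"
      unfolding async_schedule_def
      by (rule tail[OF finV ne]) (use S[OF wV] in auto)
  qed
  also have "\<dots> = real (card V) * (2 / exp 1) ^ (3 * card V)" by simp
  finally have bad: "measure_pmf.prob ?M (UNIV - ?G) \<le> real (card V) * (2 / exp 1) ^ (3 * card V)" .
  have "measure_pmf.prob ?M (UNIV - ?G) = 1 - measure_pmf.prob ?M ?G"
    using measure_pmf.prob_compl[of ?G ?M] by simp
  then show "measure_pmf.prob ?M ?G \<ge> 1 - real (card V) * (2 / exp 1) ^ (3 * card V)" using bad by linarith
qed


end
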